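(* Let $(G_1,s_1,t_1)$ and $(G_2,s_2,t_2)$ be TTSPGs, $L_1=(G_1,l_1)$, $L_2=(G_2,l_2)$ linkages, $(G,s_2,t_1)=(G_1,s_1,t_1)\circ(G_2,s_2,t_2)$, and $L=(G,l)$ with $l$ restricting to $l_1$ on edges from $G_1$ and to $l_2$ on edges from $G_2$. Suppose $M(L)\neq\emptyset$. Then $M(L)$ is connected if and only if both $M(L_1)$ and $M(L_2)$ are connected.
   Context: A graph has a finite vertex set and a finite multiset of edges that are unordered pairs of distinct vertices. A linkage is $L=(G,l)$ with $l:E\to\mathbb R_{\ge0}$; $C(L)=\{p:V\to\mathbb R^2:|p(u)-p(v)|=l(\{u,v\})\ \forall\{u,v\}\in E\}\subseteq\mathbb R^{2|V|}$, and $M(L)$ is the quotient of $C(L)$ by the group of orientation preserving isometries of $\mathbb R^2$ (quotient topology). TTG: $(G,s,t)$ with $s\ne t$; series composition $(G_1,s_1,t_1)\circ(G_2,s_2,t_2)=(G_1\cup_{t_2\sim s_1}G_2,s_2,t_1)$ (disjoint union with $t_2$ identified to $s_1$); parallel composition $(G_1,s_1,t_1)\|(G_2,s_2,t_2)=(G_1\cup_{s_1\sim s_2,t_1\sim t_2}G_2,s_1,t_1)$. TTSPGs: the smallest class of TTGs containing a single edge $(K_2,s,t)$ and closed under both compositions. *)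

theory Defs
  imports "HOL-Analysis.Analysis"
begin

(* A graph is given by a finite vertex set V, a set E of edge names and an
   endpoint map ends; distinct edge names with the same endpoints model
   parallel edges (multiset of edges).  The plane R^2 is identified with C. *)

(* Two-terminal series-parallel graphs (sub-TTGs living inside a common
   vertex type 'v / edge type 'e; compositions are disjoint unions with the
   prescribed identifications). *)
inductive ttspg :: "'v set \<Rightarrow> 'e set \<Rightarrow> ('e \<Rightarrow> 'v \<times> 'v) \<Rightarrow> 'v \<Rightarrow> 'v \<Rightarrow> bool" where
  edge: "s \<noteq> t \<Longrightarrow> ends e \<in> {(s, t), (t, s)} \<Longrightarrow> ttspg {s, t} {e} ends s t"
| series: "ttspg V1 E1 ends s1 t1 \<Longrightarrow> ttspg V2 E2 ends s2 t2 \<Longrightarrow>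
     V1 \<inter> V2 = {s1} \<Longrightarrow> t2 = s1 \<Longrightarrow> E1 \<inter> E2 = {} \<Longrightarrow>
     ttspg (V1 \<union> V2) (E1 \<union> E2) ends s2 t1"
| parallel: "ttspg V1 E1 ends s1 t1 \<Longrightarrow> ttspg V2 E2 ends s2 t2 \<Longrightarrow>
     V1 \<inter> V2 = {s1, t1} \<Longrightarrow> s2 = s1 \<Longrightarrow> t2 = t1 \<Longrightarrow> E1 \<inter> E2 = {} \<Longrightarrow>
     ttspg (V1 \<union> V2) (E1 \<union> E2) ends s1 t1"

definition conf :: "'v set \<Rightarrow> 'e set \<Rightarrow> ('e \<Rightarrow> 'v \<times> 'v) \<Rightarrow> ('e \<Rightarrow> real) \<Rightarrow> ('v \<Rightarrow> complex) set" where
  "conf V E ends l = {p \<in> PiE V (\<lambda>_. UNIV).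
      \<forall>e\<in>E. cmod (p (fst (ends e)) - p (snd (ends e))) = l e}"

definition isom_rel :: "'v set \<Rightarrow> ('v \<Rightarrow> complex) set \<Rightarrow> (('v \<Rightarrow> complex) \<times> ('v \<Rightarrow> complex)) set" where
  "isom_rel V C = {(p, q). p \<in> C \<and> q \<in> C \<and>
      (\<exists>a b. cmod a = 1 \<and> (\<forall>v\<in>V. q v = a * p v + b))}"

definition quotient_topology :: "'a topology \<Rightarrow> ('a \<times> 'a) set \<Rightarrow> 'a set topology" where
  "quotient_topology X R = topology (\<lambda>U. U \<subseteq> topspace X // R \<and> openin X (\<Union>U))"

definition moduli :: "'v set \<Rightarrow> 'e set \<Rightarrow> ('e \<Rightarrow> 'v \<times> 'v) \<Rightarrow> ('e \<Rightarrow> real) \<Rightarrow> ('v \<Rightarrow> complex) set topology" where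
  "moduli V E ends l = quotient_topology (top_of_set (conf V E ends l)) (isom_rel V (conf V E ends l))"

end

theory Submission
  imports Defs
begin

lemma quot_open:
  assumes eq: "equiv (topspace X) R"
  shows "openin (quotient_topology X R) = (\<lambda>U. U \<subseteq> topspace X // R \<and> openin X (\<Union>U))"
  unfolding quotient_topology_def
proof (rule topology_inverse')
  have i1: "S \<inter> T \<subseteq> topspace X // R \<and> openin X (\<Union>(S \<inter> T))"
    if S: "S \<subseteq> topspace X // R \<and> openin X (\<Union>S)"
      and T: "T \<subseteq> topspace X // R \<and> openin X (\<Union>T)" for S T
  proof -
    have "\<Union>(S \<inter> T) = \<Union>S \<inter> \<Union>T"
    proof
      show "\<Union>S \<inter> \<Union>T \<subseteq> \<Union>(S \<inter> T)"
      proof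
        fix x assume "x \<in> \<Union>S \<inter> \<Union>T"
        then obtain a b where "a \<in> S" "b \<in> T" "x \<in> a" "x \<in> b" by auto
        moreover have "a = b \<or> a \<inter> b = {}"
          using quotient_disj[OF eq] S T \<open>a \<in> S\<close> \<open>b \<in> T\<close> by blast
        ultimately show "x \<in> \<Union>(S \<inter> T)" by auto
      qed
    qed auto
    then show ?thesis using S T by auto
  qed
  have i2: "\<Union>K \<subseteq> topspace X // R \<and> openin X (\<Union>(\<Union>K))"
    if "\<forall>U\<in>K. U \<subseteq> topspace X // R \<and> openin X (\<Union>U)" for K
  proof -
    have "\<Union>(\<Union>K) = \<Union>(Union ` K)" by auto
    moreover have "openin X (\<Union>(Union ` K))"
      by (rule openin_Union) (use that in auto)
    ultimately show ?thesis using that by auto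
  qed
  show "istopology (\<lambda>U. U \<subseteq> topspace X // R \<and> openin X (\<Union>U))"
    unfolding istopology_def using i1 i2 by blast
qed

lemma quot_topspace:
  assumes eq: "equiv (topspace X) R"
  shows "topspace (quotient_topology X R) = topspace X // R"
proof -
  have "openin (quotient_topology X R) (topspace X // R)"
    using quot_open[OF eq] Union_quotient[OF eq] by simp
  moreover have "\<And>U. openin (quotient_topology X R) U \<Longrightarrow> U \<subseteq> topspace X // R"
    using quot_open[OF eq] by simp
  ultimately show ?thesis
    unfolding topspace_def by blast
qed

lemma quot_connected:
  assumes eq: "equiv (topspace X) R"
    and cl: "\<And>x. x \<in> topspace X \<Longrightarrow> connectedin X (R``{x})"
  shows "connected_space (quotient_topology X R) \<longleftrightarrow> connected_space X"
proof -
  define f where "f x = R``{x}" for x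
  have sub: "{x \<in> topspace X. f x \<in> U} = \<Union>U" if U: "U \<subseteq> topspace X // R" for U
  proof
    show "{x \<in> topspace X. f x \<in> U} \<subseteq> \<Union>U"
      using eq unfolding f_def equiv_def refl_on_def by blast
    show "\<Union>U \<subseteq> {x \<in> topspace X. f x \<in> U}"
    proof
      fix x assume "x \<in> \<Union>U"
      then obtain c where c: "c \<in> U" "x \<in> c" by auto
      then obtain y where y: "c = R``{y}" "y \<in> topspace X" using U by (meson in_mono quotientE)
      have "x \<in> topspace X" using c y eq unfolding equiv_def refl_on_def by blast
      moreover have "R``{x} = R``{y}" using c y eq
        by (metis Image_singleton_iff equiv_class_eq_iff)
      ultimately show "x \<in> {x \<in> topspace X. f x \<in> U}" using c y f_def by auto
    qed
  qed
  have img: "f ` topspace X = topspace X // R"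
    unfolding f_def quotient_def by auto
  have qm: "quotient_map X (quotient_topology X R) f"
    unfolding quotient_map_def quot_topspace[OF eq]
    using img sub by (simp add: quot_open[OF eq])
  have mm: "monotone_map X (quotient_topology X R) f"
    unfolding monotone_map_def quot_topspace[OF eq]
  proof (intro conjI ballI)
    show "f ` topspace X \<subseteq> topspace X // R" using img by simp
    fix y assume "y \<in> topspace X // R"
    then have "{x \<in> topspace X. f x = y} = \<Union>{y}" using sub[of "{y}"] by auto
    then show "connectedin X {x \<in> topspace X. f x = y}"
      using \<open>y \<in> topspace X // R\<close> cl by (auto elim: quotientE)
  qed
  show ?thesis
    using connected_space_quotient_map_image[OF qm]
      connected_space_monotone_quotient_map_preimage[OF mm qm] by blast
qed

lemma ttspg_ends: "ttspg V E ends s t \<Longrightarrow> e \<in> E \<Longrightarrow> fst (ends e) \<in> V \<and> snd (ends e) \<in> V"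
  by (induction rule: ttspg.induct) auto

lemma conf_iso:
  assumes p: "p \<in> conf V E ends l" and a: "cmod a = 1"
    and en: "\<forall>e\<in>E. fst (ends e) \<in> V \<and> snd (ends e) \<in> V"
  shows "restrict (\<lambda>v. a * p v + b) V \<in> conf V E ends l"
proof -
  have "cmod (a * p u + b - (a * p w + b)) = cmod (p u - p w)" for u w
  proof -
    have "a * p u + b - (a * p w + b) = a * (p u - p w)" by (simp add: algebra_simps)
    then show ?thesis by (simp add: norm_mult a)
  qed
  then show ?thesis using p en unfolding conf_def by auto
qed

lemma isom_equiv:
  assumes en: "\<forall>e\<in>E. fst (ends e) \<in> V \<and> snd (ends e) \<in> V"
  shows "equiv (conf V E ends l) (isom_rel V (conf V E ends l))"
proof (rule equivI)
  let ?C = "conf V E ends l"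
  show "isom_rel V ?C \<subseteq> ?C \<times> ?C" unfolding isom_rel_def by auto
  show "refl_on ?C (isom_rel V ?C)" unfolding refl_on_def
  proof
    fix p assume p: "p \<in> ?C"
    have "cmod (1::complex) = 1 \<and> (\<forall>v\<in>V. p v = 1 * p v + 0)" by simp
    then show "(p, p) \<in> isom_rel V ?C" unfolding isom_rel_def using p by blast
  qed
  show "sym (isom_rel V ?C)" unfolding sym_def
  proof (intro allI impI)
    fix p q assume "(p, q) \<in> isom_rel V ?C"
    then obtain a b where h: "p \<in> ?C" "q \<in> ?C" "cmod a = 1" "\<forall>v\<in>V. q v = a * p v + b"
      unfolding isom_rel_def by auto
    have a0: "a \<noteq> 0" using h(3) by auto
    have "cmod (1/a) = 1 \<and> (\<forall>v\<in>V. p v = (1/a) * q v + (- b / a))"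
      using h a0 by (auto simp: norm_divide field_simps)
    then show "(q, p) \<in> isom_rel V ?C" unfolding isom_rel_def using h by blast
  qed
  show "trans (isom_rel V ?C)" unfolding trans_def
  proof (intro allI impI)
    fix p q r assume h1: "(p, q) \<in> isom_rel V ?C" and h2: "(q, r) \<in> isom_rel V ?C"
    from h1 obtain a b where g1: "p \<in> ?C" "cmod a = 1" "\<forall>v\<in>V. q v = a * p v + b"
      unfolding isom_rel_def by blast
    from h2 obtain c d where g2: "r \<in> ?C" "cmod c = 1" "\<forall>v\<in>V. r v = c * q v + d"
      unfolding isom_rel_def by blast
    note h = g1 g2
    have "cmod (c * a) = 1 \<and> (\<forall>v\<in>V. r v = (c * a) * p v + (c * b + d))"
      using g1 g2 by (auto simp: norm_mult algebra_simps)
    then show "(p, r) \<in> isom_rel V ?C" unfolding isom_rel_def using g1 g2 by blast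
  qed
qed

lemma isom_class:
  assumes en: "\<forall>e\<in>E. fst (ends e) \<in> V \<and> snd (ends e) \<in> V"
    and p: "p \<in> conf V E ends l"
  shows "isom_rel V (conf V E ends l) `` {p} =
    (\<lambda>x. restrict (\<lambda>v. fst x * p v + snd x) V) ` (sphere 0 1 \<times> UNIV)"
proof
  let ?C = "conf V E ends l"
  show "isom_rel V ?C `` {p} \<subseteq> (\<lambda>x. restrict (\<lambda>v. fst x * p v + snd x) V) ` (sphere 0 1 \<times> UNIV)"
  proof
    fix q assume "q \<in> isom_rel V ?C `` {p}"
    then obtain a b where h: "q \<in> ?C" "cmod a = 1" "\<forall>v\<in>V. q v = a * p v + b"
      unfolding isom_rel_def by auto
    have "q \<in> extensional V" using h(1) unfolding conf_def by (auto simp: PiE_def)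
    then have "q = restrict (\<lambda>v. a * p v + b) V" using h(3)
      by (auto simp: extensional_def)
    then show "q \<in> (\<lambda>x. restrict (\<lambda>v. fst x * p v + snd x) V) ` (sphere 0 1 \<times> UNIV)"
      using h(2) by (auto intro!: image_eqI[of _ _ "(a, b)"])
  qed
  show "(\<lambda>x. restrict (\<lambda>v. fst x * p v + snd x) V) ` (sphere 0 1 \<times> UNIV) \<subseteq> isom_rel V ?C `` {p}"
  proof clarsimp
    fix a b :: complex assume "cmod a = 1"
    then show "(p, restrict (\<lambda>v. a * p v + b) V) \<in> isom_rel V ?C"
      using conf_iso[OF p _ en] p unfolding isom_rel_def by auto
  qed
qed

lemma moduli_connected:
  assumes en: "\<forall>e\<in>E. fst (ends e) \<in> V \<and> snd (ends e) \<in> V"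
  shows "connected_space (moduli V E ends l) \<longleftrightarrow> connected (conf V E ends l)"
proof -
  let ?C = "conf V E ends l"
  have eq: "equiv (topspace (top_of_set ?C)) (isom_rel V ?C)"
    using isom_equiv[OF en] by simp
  have "connectedin (top_of_set ?C) (isom_rel V ?C `` {p})" if p: "p \<in> topspace (top_of_set ?C)" for p
  proof -
    have pC: "p \<in> ?C" using p by simp
    have "connected ((\<lambda>x. restrict (\<lambda>v. fst x * p v + snd x) V) ` (sphere (0::complex) 1 \<times> (UNIV::complex set)))"
    proof (rule connected_continuous_image)
      show "connected (sphere (0::complex) 1 \<times> (UNIV::complex set))"
        by (intro connected_Times connected_sphere connected_UNIV) auto
      show "continuous_on (sphere 0 1 \<times> UNIV) (\<lambda>x. restrict (\<lambda>v. fst x * p v + snd x) V)"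
      proof (rule continuous_on_coordinatewise_then_product)
        fix v
        show "continuous_on (sphere 0 1 \<times> UNIV) (\<lambda>x. restrict (\<lambda>v. fst x * p v + snd x) V v)"
          by (cases "v \<in> V") (auto intro!: continuous_intros)
      qed
    qed
    moreover have "isom_rel V ?C `` {p} \<subseteq> ?C" unfolding isom_rel_def by auto
    ultimately show ?thesis using isom_class[OF en pC]
      by (simp add: connectedin_subtopology)
  qed
  then have "connected_space (moduli V E ends l) \<longleftrightarrow> connected_space (top_of_set ?C)"
    unfolding moduli_def by (rule quot_connected[OF eq])
  also have "\<dots> \<longleftrightarrow> connected ?C"
    by (metis connectedin_iff_connected connectedin_subtopology connectedin_topspace order_refl topspace_euclidean_subtopology)
  finally show ?thesis .
qed

theorem mainTheorem11:
  fixes V1 V2 :: "'v set" and E1 E2 :: "'e set" and ends :: "'e \<Rightarrow> 'v \<times> 'v"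
    and l1 l2 l :: "'e \<Rightarrow> real" and s1 t1 s2 t2 :: 'v
  assumes "ttspg V1 E1 ends s1 t1" and "ttspg V2 E2 ends s2 t2"
    and "V1 \<inter> V2 = {s1}" and "t2 = s1" and "E1 \<inter> E2 = {}"
    and "\<forall>e\<in>E1. l1 e \<ge> 0" and "\<forall>e\<in>E2. l2 e \<ge> 0"
    and "\<forall>e\<in>E1. l e = l1 e" and "\<forall>e\<in>E2. l e = l2 e"
    and "topspace (moduli (V1 \<union> V2) (E1 \<union> E2) ends l) \<noteq> {}"
  shows "connected_space (moduli (V1 \<union> V2) (E1 \<union> E2) ends l) \<longleftrightarrow>
         connected_space (moduli V1 E1 ends l1) \<and> connected_space (moduli V2 E2 ends l2)"
proof -
  let ?C = "conf (V1 \<union> V2) (E1 \<union> E2) ends l"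
  let ?C1 = "conf V1 E1 ends l1"
  let ?C2 = "conf V2 E2 ends l2"
  have en1: "\<forall>e\<in>E1. fst (ends e) \<in> V1 \<and> snd (ends e) \<in> V1"
    using ttspg_ends[OF assms(1)] by blast
  have en2: "\<forall>e\<in>E2. fst (ends e) \<in> V2 \<and> snd (ends e) \<in> V2"
    using ttspg_ends[OF assms(2)] by blast
  have en: "\<forall>e\<in>E1 \<union> E2. fst (ends e) \<in> V1 \<union> V2 \<and> snd (ends e) \<in> V1 \<union> V2"
    using en1 en2 by blast
  have s1: "s1 \<in> V1" "s1 \<in> V2" using assms(3) by auto
  have Cne: "?C \<noteq> {}"
  proof
    assume e: "?C = {}"
    have eqv: "equiv (topspace (top_of_set ?C)) (isom_rel (V1 \<union> V2) ?C)"
      using isom_equiv[OF en] by simp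
    have "topspace (moduli (V1 \<union> V2) (E1 \<union> E2) ends l) = topspace (top_of_set ?C) // isom_rel (V1 \<union> V2) ?C"
      unfolding moduli_def by (rule quot_topspace[OF eqv])
    also have "\<dots> = {}" using e by (simp add: quotient_def)
    finally show False using assms(10) by blast
  qed
  define G where "G x = (\<lambda>v. if v \<in> V2 then snd x v else if v \<in> V1 then fst x v + (snd x s1 - fst x s1) else undefined)"
    for x :: "('v \<Rightarrow> complex) \<times> ('v \<Rightarrow> complex)"
  have G1: "G x v = fst x v + (snd x s1 - fst x s1)" if "v \<in> V1" for x v
  proof (cases "v \<in> V2")
    case True
    then have "v = s1" using that assms(3) by blast
    then show ?thesis using True unfolding G_def by simp
  qed (use that in \<open>simp add: G_def\<close>)
  have G2: "G x v = snd x v" if "v \<in> V2" for x v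
    using that unfolding G_def by auto
  have Gin: "G x \<in> ?C" if x: "x \<in> ?C1 \<times> ?C2" for x
  proof -
    have "G x \<in> PiE (V1 \<union> V2) (\<lambda>_. UNIV)" unfolding G_def PiE_def extensional_def by auto
    moreover have "cmod (G x (fst (ends e)) - G x (snd (ends e))) = l e" if e: "e \<in> E1 \<union> E2" for e
    proof (cases "e \<in> E1")
      case True
      then show ?thesis using x en1 G1 assms(8) unfolding conf_def by auto
    next
      case False
      then have "e \<in> E2" using e by auto
      then show ?thesis using x en2 G2 assms(9) unfolding conf_def by auto
    qed
    ultimately show ?thesis unfolding conf_def by auto
  qed
  have R1: "restrict p V1 \<in> ?C1" if p: "p \<in> ?C" for p
    using p en1 assms(8) unfolding conf_def by auto
  have R2: "restrict p V2 \<in> ?C2" if p: "p \<in> ?C" for p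
    using p en2 assms(9) unfolding conf_def by auto
  have GR: "G (restrict p V1, restrict p V2) = p" if p: "p \<in> ?C" for p
  proof
    fix v
    show "G (restrict p V1, restrict p V2) v = p v"
      using p s1 unfolding G_def conf_def PiE_def extensional_def by auto
  qed
  have RG2: "restrict (G (p1, p2)) V2 = p2" if "p2 \<in> ?C2" for p1 p2
  proof
    fix v show "restrict (G (p1, p2)) V2 v = p2 v"
      using that unfolding G_def conf_def PiE_def extensional_def by auto
  qed
  have RG1: "restrict (G (p1, restrict (\<lambda>v. 1 * p2 v + (p1 s1 - p2 s1)) V2)) V1 = p1"
    if "p1 \<in> ?C1" for p1 p2
  proof
    fix v show "restrict (G (p1, restrict (\<lambda>v. 1 * p2 v + (p1 s1 - p2 s1)) V2)) V1 v = p1 v"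
    proof (cases "v \<in> V1")
      case True
      then show ?thesis using G1[OF True] s1 by simp
    next
      case False
      then show ?thesis using that unfolding conf_def PiE_def extensional_def by auto
    qed
  qed
  have C1ne: "?C1 \<noteq> {}" and C2ne: "?C2 \<noteq> {}" using Cne R1 R2 by blast+
  have imgC: "G ` (?C1 \<times> ?C2) = ?C"
  proof
    show "G ` (?C1 \<times> ?C2) \<subseteq> ?C" using Gin by blast
    show "?C \<subseteq> G ` (?C1 \<times> ?C2)"
    proof
      fix p assume "p \<in> ?C"
      then show "p \<in> G ` (?C1 \<times> ?C2)"
        using GR R1 R2 by (metis SigmaI image_eqI)
    qed
  qed
  have imgC1: "(\<lambda>p. restrict p V1) ` ?C = ?C1"
  proof
    show "(\<lambda>p. restrict p V1) ` ?C \<subseteq> ?C1" using R1 by blast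
    show "?C1 \<subseteq> (\<lambda>p. restrict p V1) ` ?C"
    proof
      fix p1 assume p1: "p1 \<in> ?C1"
      obtain p2 where p2: "p2 \<in> ?C2" using C2ne by blast
      have "restrict (\<lambda>v. 1 * p2 v + (p1 s1 - p2 s1)) V2 \<in> ?C2"
        by (rule conf_iso[OF p2 _ en2]) simp
      then show "p1 \<in> (\<lambda>p. restrict p V1) ` ?C"
        using Gin p1 RG1[OF p1, of p2] by (metis SigmaI image_eqI)
    qed
  qed
  have imgC2: "(\<lambda>p. restrict p V2) ` ?C = ?C2"
  proof
    show "(\<lambda>p. restrict p V2) ` ?C \<subseteq> ?C2" using R2 by blast
    show "?C2 \<subseteq> (\<lambda>p. restrict p V2) ` ?C"
    proof
      fix p2 assume p2: "p2 \<in> ?C2"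
      obtain p1 where p1: "p1 \<in> ?C1" using C1ne by blast
      show "p2 \<in> (\<lambda>p. restrict p V2) ` ?C"
        using Gin p1 p2 RG2[OF p2, of p1] by (metis SigmaI image_eqI)
    qed
  qed
  have contG: "continuous_on UNIV G"
  proof (rule continuous_on_coordinatewise_then_product)
    fix v
    have c1: "continuous_on UNIV (\<lambda>x::('v \<Rightarrow> complex) \<times> ('v \<Rightarrow> complex). fst x w)" for w
      using continuous_on_compose[OF continuous_on_fst[OF continuous_on_id] continuous_on_subset[OF continuous_on_product_coordinates[of w]]]
      by (simp add: o_def)
    have c2: "continuous_on UNIV (\<lambda>x::('v \<Rightarrow> complex) \<times> ('v \<Rightarrow> complex). snd x w)" for w
      using continuous_on_compose[OF continuous_on_snd[OF continuous_on_id] continuous_on_subset[OF continuous_on_product_coordinates[of w]]]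
      by (simp add: o_def)
    show "continuous_on UNIV (\<lambda>x. G x v)"
      unfolding G_def by (cases "v \<in> V2"; cases "v \<in> V1") (auto intro!: continuous_intros c1 c2)
  qed
  have contR: "continuous_on UNIV (\<lambda>p::'v \<Rightarrow> complex. restrict p V)" for V
  proof (rule continuous_on_coordinatewise_then_product)
    fix v show "continuous_on UNIV (\<lambda>p::'v \<Rightarrow> complex. restrict p V v)"
      by (cases "v \<in> V") auto
  qed
  have "connected ?C \<longleftrightarrow> connected ?C1 \<and> connected ?C2"
  proof
    assume c: "connected ?C"
    show "connected ?C1 \<and> connected ?C2"
      using connected_continuous_image[OF continuous_on_subset[OF contR] c, of V1]
        connected_continuous_image[OF continuous_on_subset[OF contR] c, of V2]
        imgC1 imgC2 by auto
  next
    assume "connected ?C1 \<and> connected ?C2"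
    then have "connected (?C1 \<times> ?C2)" by (simp add: connected_Times)
    then show "connected ?C"
      using connected_continuous_image[OF continuous_on_subset[OF contG]] imgC by fastforce
  qed
  then show ?thesis
    using moduli_connected[OF en] moduli_connected[OF en1] moduli_connected[OF en2] by simp
qed

end
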